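(* For all $s\in\mathbb{Z}$ and each $x\in V_{\alpha_s}$, $g_{\alpha_s}(x)=a_{\alpha_{s+1}}(b_{\alpha_s}(x))$.
   Context: Fix $d\ge1$, $\lambda>0$, scales $\alpha_s=\lambda 2^s$ ($s\in\mathbb{Z}$), and grids $G_{\alpha_s}\subset\mathbb{R}^d$ with $G_{\alpha_0}=\lambda\mathbb{Z}^d$ and $G_{\alpha_{s+1}}=2(G_{\alpha_s}-O_s)+O_s+\frac{\alpha_s}{2}\varepsilon_s$ for some $O_s\in G_{\alpha_s}$, $\varepsilon_s\in\{-1,1\}^d$. $\mathrm{Vor}_G(x)$ is the Voronoi cell of $x$ in the grid $G$ (closed cube of side $\alpha_s$ centered at $x$ for $G=G_{\alpha_s}$). The vertex map $g_{\alpha_s}:G_{\alpha_s}\to G_{\alpha_{s+1}}$ sends $x$ to the unique $y\in G_{\alpha_{s+1}}$ with $x\in \mathrm{Vor}_{G_{\alpha_{s+1}}}(y)$. Let $P\subset\mathbb{R}^d$ be finite. For $p\in P$, $a_{\alpha_s}(p)$ is the grid point of $G_{\alpha_s}$ whose Voronoi cell contains $p$ (assumed unique). The active vertices are $V_{\alpha_s}:=a_{\alpha_s}(P)$. For $v\in V_{\alpha_s}$, $b_{\alpha_s}(v)$ is the point of $P\cap \mathrm{Vor}_{G_{\alpha_s}}(v)$ closest to $v$, ties broken by a fixed total order on $P$. *)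

theory Defs
  imports "HOL-Analysis.Analysis"
begin

definition scale :: "real \<Rightarrow> int \<Rightarrow> real" where
  "scale lam s = lam * 2 powr (real_of_int s)"

definition voronoi :: "('a::metric_space) set \<Rightarrow> 'a \<Rightarrow> 'a set" where
  "voronoi G x = {y. \<forall>z\<in>G. dist y x \<le> dist y z}"

text \<open>The grid point of G whose Voronoi cell contains p (a_alpha(p); also used for the
  vertex map g_alpha, which sends x to the point of the next grid whose cell contains x).\<close>
definition grid_point :: "('a::metric_space) set \<Rightarrow> 'a \<Rightarrow> 'a" where
  "grid_point G p = (THE v. v \<in> G \<and> p \<in> voronoi G v)"

definition vertex_map :: "('a::metric_space) set \<Rightarrow> 'a \<Rightarrow> 'a" where
  "vertex_map G' x = (THE y. y \<in> G' \<and> x \<in> voronoi G' y)"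

definition rep_point :: "('a::metric_space) set \<Rightarrow> ('a \<times> 'a) set \<Rightarrow> 'a set \<Rightarrow> 'a \<Rightarrow> 'a" where
  "rep_point P R G v = (THE p. p \<in> P \<inter> voronoi G v \<and>
      (\<forall>q \<in> P \<inter> voronoi G v. dist p v < dist q v \<or> (dist p v = dist q v \<and> (p, q) \<in> R)))"

end

theory Submission
  imports Defs
begin

definition Lat :: "real^'d \<Rightarrow> real \<Rightarrow> (real^'d) set" where
  "Lat c a = {y. \<forall>i. \<exists>k::int. y$i = c$i + a * of_int k}"

lemma dist_sq: "dist (u::real^'d) v \<le> dist u w \<longleftrightarrow>
   (\<Sum>i\<in>UNIV. (u$i - v$i)^2) \<le> (\<Sum>i\<in>UNIV. (u$i - w$i)^2)"
  by (simp add: dist_vec_def L2_set_def dist_real_def)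

lemma dist_sq_less: "dist (u::real^'d) v < dist u w \<longleftrightarrow>
   (\<Sum>i\<in>UNIV. (u$i - v$i)^2) < (\<Sum>i\<in>UNIV. (u$i - w$i)^2)"
  by (simp add: dist_vec_def L2_set_def dist_real_def)

lemma coord_le:
  assumes "\<And>i. \<bar>(u::real^'d)$i - v$i\<bar> \<le> \<bar>u$i - w$i\<bar>"
  shows "dist u v \<le> dist u w"
  unfolding dist_sq
proof (rule sum_mono)
  fix i show "(u$i - v$i)^2 \<le> (u$i - w$i)^2"
  proof -
    have "\<bar>u$i - v$i\<bar>^2 \<le> \<bar>u$i - w$i\<bar>^2" by (rule power_mono[OF assms[of i]]) simp
    then show ?thesis by simp
  qed
qed

lemma coord_less:
  assumes "\<And>i. \<bar>(u::real^'d)$i - v$i\<bar> \<le> \<bar>u$i - w$i\<bar>"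
    and "\<bar>u$j - v$j\<bar> < \<bar>u$j - w$j\<bar>"
  shows "dist u v < dist u w"
  unfolding dist_sq_less
proof (rule sum_strict_mono_ex1)
  show "finite (UNIV::'d set)" by simp
  show "\<forall>i\<in>UNIV. (u$i - v$i)^2 \<le> (u$i - w$i)^2"
  proof
    fix i
    have "\<bar>u$i - v$i\<bar>^2 \<le> \<bar>u$i - w$i\<bar>^2" by (rule power_mono[OF assms(1)[of i]]) simp
    then show "(u$i - v$i)^2 \<le> (u$i - w$i)^2" by simp
  qed
  show "\<exists>i\<in>UNIV. (u$i - v$i)^2 < (u$i - w$i)^2"
  proof
    have "\<bar>u$j - v$j\<bar>^2 < \<bar>u$j - w$j\<bar>^2" by (rule power_strict_mono[OF assms(2)]) simp_all
    then show "(u$j - v$j)^2 < (u$j - w$j)^2" by simp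
  qed simp
qed

lemma sum_axis:
  fixes q x :: "real^'d"
  shows "(\<Sum>j\<in>UNIV. (q$j - (x + t *\<^sub>R axis i 1)$j)^2) =
     (\<Sum>j\<in>UNIV. (q$j - x$j)^2) - (q$i - x$i)^2 + (q$i - x$i - t)^2"
proof -
  have A: "(\<Sum>j\<in>UNIV. (q$j - (x + t *\<^sub>R axis i 1)$j)^2) =
     (q$i - x$i - t)^2 + (\<Sum>j\<in>UNIV - {i}. (q$j - (x + t *\<^sub>R axis i 1)$j)^2)"
    by (subst sum.remove[of UNIV i]) (auto simp: axis_def diff_diff_eq)
  have B: "(\<Sum>j\<in>UNIV. (q$j - x$j)^2) = (q$i - x$i)^2 + (\<Sum>j\<in>UNIV - {i}. (q$j - x$j)^2)"
    by (subst sum.remove[of UNIV i]) auto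
  have C: "(\<Sum>j\<in>UNIV - {i}. (q$j - (x + t *\<^sub>R axis i 1)$j)^2) = (\<Sum>j\<in>UNIV - {i}. (q$j - x$j)^2)"
    by (rule sum.cong) (auto simp: axis_def)
  show ?thesis using A B C by simp
qed

lemma cell_bound:
  fixes q x :: "real^'d"
  assumes "a > 0" "x \<in> Lat c a" "q \<in> voronoi (Lat c a) x"
  shows "\<bar>q$i - x$i\<bar> \<le> a/2"
proof -
  have mem: "x + t *\<^sub>R axis i 1 \<in> Lat c a" if "t = a \<or> t = -a" for t
  proof -
    { fix j
      obtain k::int where k: "x$j = c$j + a * of_int k" using assms(2) unfolding Lat_def by blast
      have "\<exists>k::int. (x + t *\<^sub>R axis i 1)$j = c$j + a * of_int k"
      proof (cases "j = i")
        case True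
        show ?thesis using that
        proof
          assume "t = a" then show ?thesis using True k
            by (intro exI[of _ "k+1"]) (simp add: axis_def algebra_simps)
        next
          assume "t = -a" then show ?thesis using True k
            by (intro exI[of _ "k-1"]) (simp add: axis_def algebra_simps)
        qed
      next
        case False then show ?thesis using k by (auto simp: axis_def)
      qed }
    then show ?thesis unfolding Lat_def by blast
  qed
  have "dist q x \<le> dist q (x + t *\<^sub>R axis i 1)" if "t = a \<or> t = -a" for t
    using assms(3) mem[OF that] unfolding voronoi_def by blast
  then have "(q$i - x$i)^2 \<le> (q$i - x$i - t)^2" if "t = a \<or> t = -a" for t
    using that unfolding dist_sq sum_axis by fastforce
  from this[of a] this[of "-a"] have "a * (2*(q$i - x$i)) \<le> a * a" "a * (-2*(q$i - x$i)) \<le> a * a"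
    by (auto simp: power2_eq_square algebra_simps)
  then have "2*(q$i - x$i) \<le> a" "-2*(q$i - x$i) \<le> a" using assms(1) mult_le_cancel_left_pos by blast+
  then show ?thesis by (auto simp: abs_if)
qed

lemma lat_img:
  fixes oc w c :: "real^'d"
  shows "(\<lambda>y. 2 *\<^sub>R (y - oc) + oc + w) ` Lat c a = Lat (2 *\<^sub>R (c - oc) + oc + w) (2*a)"
proof (intro equalityI subsetI)
  fix z assume "z \<in> (\<lambda>y. 2 *\<^sub>R (y - oc) + oc + w) ` Lat c a"
  then obtain y where y: "y \<in> Lat c a" "z = 2 *\<^sub>R (y - oc) + oc + w" by blast
  show "z \<in> Lat (2 *\<^sub>R (c - oc) + oc + w) (2*a)"
    unfolding Lat_def
  proof (intro CollectI allI)
    fix i obtain k::int where "y$i = c$i + a * of_int k" using y(1) unfolding Lat_def by blast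
    moreover have "z$i = 2*(y$i - oc$i) + oc$i + w$i" using y(2) by simp
    ultimately show "\<exists>k::int. z$i = (2 *\<^sub>R (c - oc) + oc + w)$i + 2*a * of_int k"
      by (intro exI[of _ k]) (simp add: algebra_simps)
  qed
next
  fix z assume z: "z \<in> Lat (2 *\<^sub>R (c - oc) + oc + w) (2*a)"
  define y where "y = (1/2) *\<^sub>R (z - oc - w) + oc"
  have "z = 2 *\<^sub>R (y - oc) + oc + w" unfolding y_def by (simp add: algebra_simps)
  moreover have "y \<in> Lat c a"
    unfolding Lat_def
  proof (intro CollectI allI)
    fix i obtain k::int where "z$i = (2 *\<^sub>R (c - oc) + oc + w)$i + 2*a * of_int k"
      using z unfolding Lat_def by blast
    then show "\<exists>k::int. y$i = c$i + a * of_int k"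
      unfolding y_def by (intro exI[of _ k]) (simp add: algebra_simps)
  qed
  ultimately show "z \<in> (\<lambda>y. 2 *\<^sub>R (y - oc) + oc + w) ` Lat c a" by blast
qed

lemma lat_vimage:
  fixes oc w c :: "real^'d"
  shows "{y. 2 *\<^sub>R (y - oc) + oc + w \<in> Lat c (2*a)} = Lat ((1/2) *\<^sub>R (c - oc - w) + oc) a"
proof -
  let ?f = "\<lambda>y::real^'d. 2 *\<^sub>R (y - oc) + oc + w"
  have inj: "inj ?f" by (rule injI) simp
  have "2 *\<^sub>R ((1/2) *\<^sub>R (c - oc - w) + oc - oc) + oc + w = c" by (simp add: algebra_simps)
  then have "Lat c (2*a) = ?f ` Lat ((1/2) *\<^sub>R (c - oc - w) + oc) a"
    using lat_img[of oc w "(1/2) *\<^sub>R (c - oc - w) + oc" a] by simp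
  then show ?thesis using inj by (auto simp: inj_image_mem_iff)
qed

lemma scale_succ: "scale lam (t+1) = 2 * scale lam t"
  unfolding scale_def by (simp add: powr_add)

lemma lat_diff:
  assumes "A > 0" "y \<in> Lat c A" "z \<in> Lat c A"
  shows "z$i = y$i \<or> \<bar>z$i - y$i\<bar> \<ge> A"
proof -
  obtain k::int where k: "y$i = c$i + A * of_int k" using assms(2) unfolding Lat_def by blast
  obtain l::int where l: "z$i = c$i + A * of_int l" using assms(3) unfolding Lat_def by blast
  have "z$i - y$i = A * of_int (l - k)" using k l by (simp add: algebra_simps)
  moreover have "l = k \<or> \<bar>real_of_int (l - k)\<bar> \<ge> 1" by linarith
  ultimately show ?thesis using assms(1)
    by (auto simp: abs_mult k l)
qed

lemma real_aux1:
  fixes d e A :: real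
  assumes "e = 0 \<or> \<bar>e\<bar> \<ge> A" "\<bar>d\<bar> \<le> A/2"
  shows "\<bar>d\<bar> \<le> \<bar>d - e\<bar>"
  using assms by linarith

lemma real_aux2:
  fixes d e A :: real
  assumes "\<bar>e\<bar> \<ge> A" "\<bar>d\<bar> < A/2"
  shows "\<bar>d\<bar> < \<bar>d - e\<bar>"
  using assms by linarith

lemma lat_vor_le:
  assumes "A > 0" "y \<in> Lat c A" "z \<in> Lat c A" "\<And>i. \<bar>p$i - y$i\<bar> \<le> A/2"
  shows "dist p y \<le> dist p z"
proof (rule coord_le)
  fix i
  show "\<bar>p$i - y$i\<bar> \<le> \<bar>p$i - z$i\<bar>"
    using real_aux1[of "z$i - y$i" A "p$i - y$i"] lat_diff[OF assms(1,2,3), of i] assms(4)[of i] by force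
qed

lemma lat_vor_less:
  assumes "A > 0" "y \<in> Lat c A" "z \<in> Lat c A" "\<And>i. \<bar>p$i - y$i\<bar> < A/2" "z \<noteq> y"
  shows "dist p y < dist p z"
proof -
  obtain j where j: "z$j \<noteq> y$j" using assms(5) by (metis vec_eq_iff)
  show ?thesis
  proof (rule coord_less)
    fix i
    show "\<bar>p$i - y$i\<bar> \<le> \<bar>p$i - z$i\<bar>"
      using real_aux1[of "z$i - y$i" A "p$i - y$i"] lat_diff[OF assms(1,2,3), of i] assms(4)[of i] by force
  next
    show "\<bar>p$j - y$j\<bar> < \<bar>p$j - z$j\<bar>"
      using real_aux2[of A "z$j - y$j" "p$j - y$j"] lat_diff[OF assms(1,2,3), of j] assms(4)[of j] j by force
  qed
qed

lemma lat_vor_mem: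
  assumes "A > 0" "y \<in> Lat c A" "\<And>i. \<bar>p$i - y$i\<bar> \<le> A/2"
  shows "p \<in> voronoi (Lat c A) y"
  unfolding voronoi_def using lat_vor_le[OF assms(1,2) _ assms(3)] by blast

lemma best_exists:
  fixes v :: "'a::metric_space"
  assumes "finite S" "S \<noteq> {}" "S \<subseteq> P" "linear_order_on P R"
  shows "\<exists>m\<in>S. \<forall>q\<in>S. dist m v < dist q v \<or> (dist m v = dist q v \<and> (m, q) \<in> R)"
  using assms
proof (induction S rule: finite_ne_induct)
  case (singleton x)
  then have "(x, x) \<in> R" using assms(4)
    unfolding linear_order_on_def partial_order_on_def preorder_on_def refl_on_def by auto
  then show ?case by auto
next
  case (insert x F)
  have refl: "(x,x) \<in> R" using insert.prems assms(4)
    unfolding linear_order_on_def partial_order_on_def preorder_on_def refl_on_def by auto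
  have tr: "trans R" and tot: "total_on P R" using assms(4)
    unfolding linear_order_on_def partial_order_on_def preorder_on_def by auto
  obtain m where m: "m \<in> F" "\<forall>q\<in>F. dist m v < dist q v \<or> (dist m v = dist q v \<and> (m, q) \<in> R)"
    using insert by auto
  show ?case
  proof (cases "dist x v < dist m v \<or> (dist x v = dist m v \<and> (x, m) \<in> R)")
    case True
    have "\<forall>q\<in>F. dist x v < dist q v \<or> (dist x v = dist q v \<and> (x, q) \<in> R)"
    proof
      fix q assume "q \<in> F"
      then have "dist m v < dist q v \<or> (dist m v = dist q v \<and> (m, q) \<in> R)" using m by blast
      then show "dist x v < dist q v \<or> (dist x v = dist q v \<and> (x, q) \<in> R)"
        using True tr unfolding trans_def by (smt (verit))
    qed
    then show ?thesis using refl by auto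
  next
    case False
    have "x \<noteq> m" using False refl by auto
    moreover have "x \<in> P" "m \<in> P" using insert.prems m(1) by auto
    ultimately have "(m, x) \<in> R \<or> (x, m) \<in> R" using tot unfolding total_on_def by blast
    then have "dist m v < dist x v \<or> (dist m v = dist x v \<and> (m, x) \<in> R)"
      using False by auto
    then show ?thesis using m by auto
  qed
qed

lemma best_unique:
  assumes "antisym R"
    and "\<forall>q\<in>S. dist m v < dist q v \<or> (dist m v = dist q v \<and> (m, q) \<in> R)" "m \<in> S"
    and "\<forall>q\<in>S. dist m' v < dist q v \<or> (dist m' v = dist q v \<and> (m', q) \<in> R)" "m' \<in> S"
  shows "m = m'"
proof -
  have "dist m v < dist m' v \<or> (dist m v = dist m' v \<and> (m, m') \<in> R)" using assms(2,5) by blast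
  moreover have "dist m' v < dist m v \<or> (dist m' v = dist m v \<and> (m', m) \<in> R)" using assms(4,3) by blast
  ultimately have "(m, m') \<in> R" "(m', m) \<in> R" by auto
  then show ?thesis using assms(1) unfolding antisym_def by blast
qed

lemma pick_real:
  fixes a X Q C E :: real and m n :: int
  assumes "a > 0" "X = C + a * m" "Q = C + a * n" "E = -1 \<or> E = 1"
  shows "\<exists>J::int. \<bar>2*a*J + (X - Q) + (a/2)*E\<bar> \<le> a/2"
proof -
  have e: "X - Q = a * of_int (m - n)" using assms(2,3) by (simp add: algebra_simps)
  have "\<exists>J0::int. 2*J0 + (m-n) = 0 \<or> 2*J0 + (m-n) = -1" by presburger
  then obtain J0::int where J0: "2*J0 + (m-n) = 0 \<or> 2*J0 + (m-n) = -1" by blast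
  have "\<exists>J1::int. 2*J1 + (m-n) = 0 \<or> 2*J1 + (m-n) = 1" by presburger
  then obtain J1::int where J1: "2*J1 + (m-n) = 0 \<or> 2*J1 + (m-n) = 1" by blast
  show ?thesis
    using assms(4)
  proof
    assume E: "E = -1"
    have "2*a*J1 + (X - Q) + (a/2)*E = a * (of_int (2*J1 + (m-n)) - 1/2)"
      using e E by (simp add: algebra_simps)
    moreover have "\<bar>a * (of_int (2*J1 + (m-n)) - 1/2)\<bar> = a/2"
    proof -
      have "of_int (2*J1 + (m-n)) = (0::real) \<or> of_int (2*J1 + (m-n)) = (1::real)"
        using J1 by (metis of_int_0 of_int_1 of_int_minus)
      moreover have "\<bar>a * (t - 1/2)\<bar> = a/2" if "t = 0 \<or> t = 1" for t :: real
        using that assms(1) by (auto simp: abs_mult)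
      ultimately show ?thesis by blast
    qed
    ultimately show ?thesis by (intro exI[of _ J1]) simp
  next
    assume E: "E = 1"
    have "2*a*J0 + (X - Q) + (a/2)*E = a * (of_int (2*J0 + (m-n)) + 1/2)"
      using e E by (simp add: algebra_simps)
    moreover have "\<bar>a * (of_int (2*J0 + (m-n)) + 1/2)\<bar> = a/2"
    proof -
      have "of_int (2*J0 + (m-n)) = (0::real) \<or> of_int (2*J0 + (m-n)) = (- 1::real)"
        using J0 by (metis of_int_0 of_int_1 of_int_minus)
      moreover have "\<bar>a * (t + 1/2)\<bar> = a/2" if "t = 0 \<or> t = - 1" for t :: real
        using that assms(1) by (auto simp: abs_mult)
      ultimately show ?thesis by blast
    qed
    ultimately show ?thesis by (intro exI[of _ J0]) simp
  qed
qed

theorem lemma5: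
  fixes lam :: real
    and G :: "int \<Rightarrow> (real ^ 'd) set"
    and Oc :: "int \<Rightarrow> real ^ 'd"
    and eps :: "int \<Rightarrow> real ^ 'd"
    and P :: "(real ^ 'd) set"
    and R :: "((real ^ 'd) \<times> (real ^ 'd)) set"
    and s :: int
    and x :: "real ^ 'd"
  assumes lam_pos: "lam > 0"
    and G0: "G 0 = {y. \<forall>i. \<exists>k::int. y $ i = lam * real_of_int k}"
    and O_in: "\<And>t. Oc t \<in> G t"
    and eps_sign: "\<And>t i. eps t $ i \<in> {-1, 1}"
    and G_succ: "\<And>t. G (t + 1) =
        (\<lambda>y. 2 *\<^sub>R (y - Oc t) + Oc t + (scale lam t / 2) *\<^sub>R eps t) ` G t"
    and P_fin: "finite P"
    and R_ord: "linear_order_on P R"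
    and a_unique: "\<And>t p. p \<in> P \<Longrightarrow> \<exists>!v. v \<in> G t \<and> p \<in> voronoi (G t) v"
    and x_active: "x \<in> grid_point (G s) ` P"
  shows "vertex_map (G (s + 1)) x = grid_point (G (s + 1)) (rep_point P R (G s) x)"
proof -
  define f where "f t y = 2 *\<^sub>R (y - Oc t) + Oc t + (scale lam t / 2) *\<^sub>R eps t" for t y
  have Gs: "G (t+1) = f t ` G t" for t using G_succ[of t] unfolding f_def by simp
  have finj: "inj (f t)" for t by (rule injI) (simp add: f_def)
  have Gpre: "G t = {y. f t y \<in> G (t+1)}" for t
    using Gs[of t] finj[of t] by (auto simp: inj_image_mem_iff)
  have Glat: "\<exists>c. G t = Lat c (scale lam t)" for t
  proof (induction t rule: int_induct[where k=0])
    case base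
    have "scale lam 0 = lam" by (simp add: scale_def)
    then show ?case using G0 by (intro exI[of _ 0]) (simp add: Lat_def)
  next
    case (step1 i)
    then obtain c where c: "G i = Lat c (scale lam i)" by blast
    show ?case using lat_img[of "Oc i" "(scale lam i / 2) *\<^sub>R eps i" c "scale lam i"]
      unfolding Gs c scale_succ f_def by blast
  next
    case (step2 i)
    then obtain c where c: "G i = Lat c (scale lam i)" by blast
    have "G (i - 1) = {y. f (i-1) y \<in> G i}" using Gpre[of "i-1"] by simp
    also have "\<dots> = {y. f (i-1) y \<in> Lat c (2 * scale lam (i-1))}"
      using c scale_succ[of lam "i-1"] by simp
    finally show ?case using lat_vimage[of "Oc (i-1)" "(scale lam (i-1) / 2) *\<^sub>R eps (i-1)" c "scale lam (i-1)"]
      unfolding f_def by blast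
  qed
  define a where "a = scale lam s"
  have apos: "a > 0" unfolding a_def scale_def using lam_pos by simp
  obtain c where c: "G s = Lat c a" using Glat[of s] unfolding a_def by blast
  obtain c' where c': "G (s+1) = Lat c' (2*a)" using Glat[of "s+1"] unfolding a_def scale_succ by blast
  have A2: "2*a > 0" using apos by simp
  obtain p0 where p0: "p0 \<in> P" "x = grid_point (G s) p0" using x_active by blast
  have xG: "x \<in> G s \<and> p0 \<in> voronoi (G s) x"
    unfolding p0(2) grid_point_def by (rule theI'[OF a_unique[OF p0(1)]])
  have xL: "x \<in> Lat c a" using xG c by simp
  have OL: "Oc s \<in> Lat c a" using O_in[of s] c by simp
  have "\<forall>i. \<exists>J::int. \<bar>2*a*J + (x$i - Oc s$i) + (a/2)*(eps s$i)\<bar> \<le> a/2"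
  proof
    fix i
    obtain m::int where m: "x$i = c$i + a * m" using xL unfolding Lat_def by blast
    obtain n::int where n: "Oc s$i = c$i + a * n" using OL unfolding Lat_def by blast
    have "eps s$i = -1 \<or> eps s$i = 1" using eps_sign[of s i] by auto
    then show "\<exists>J::int. \<bar>2*a*J + (x$i - Oc s$i) + (a/2)*(eps s$i)\<bar> \<le> a/2"
      using pick_real[OF apos m n] by blast
  qed
  then obtain J :: "'d \<Rightarrow> int" where J: "\<And>i. \<bar>2*a*J i + (x$i - Oc s$i) + (a/2)*(eps s$i)\<bar> \<le> a/2"
    by metis
  define u where "u = x + (\<chi> i. a * of_int (J i))"
  have uL: "u \<in> Lat c a"
    unfolding Lat_def
  proof (intro CollectI allI)
    fix i
    obtain m::int where m: "x$i = c$i + a * m" using xL unfolding Lat_def by blast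
    show "\<exists>k::int. u$i = c$i + a * of_int k"
      using m by (intro exI[of _ "m + J i"]) (simp add: u_def algebra_simps)
  qed
  define y where "y = f s u"
  have yG: "y \<in> G (s+1)" using Gs[of s] uL c unfolding y_def by simp
  have yL: "y \<in> Lat c' (2*a)" using yG c' by simp
  have yx: "y$i - x$i = 2*a*J i + (x$i - Oc s$i) + (a/2)*(eps s$i)" for i
    unfolding y_def f_def u_def a_def by (simp add: algebra_simps)
  have xy: "\<bar>x$i - y$i\<bar> \<le> a/2" for i
    using J[of i] yx[of i] by (metis abs_minus_commute)
  have xy_lt: "\<bar>x$i - y$i\<bar> < (2*a)/2" for i using xy[of i] apos by simp
  have vm: "vertex_map (G (s+1)) x = y"
    unfolding vertex_map_def
  proof (rule the_equality)
    show "y \<in> G (s+1) \<and> x \<in> voronoi (G (s+1)) y"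
      using yG c' lat_vor_mem[OF A2 yL, of x] xy_lt by (simp add: less_imp_le)
  next
    fix z assume z: "z \<in> G (s+1) \<and> x \<in> voronoi (G (s+1)) z"
    show "z = y"
    proof (rule ccontr)
      assume "z \<noteq> y"
      have zL: "z \<in> Lat c' (2*a)" using z c' by simp
      have "dist x y < dist x z" by (rule lat_vor_less[OF A2 yL zL xy_lt \<open>z \<noteq> y\<close>])
      moreover have "dist x z \<le> dist x y" using z yG unfolding voronoi_def by blast
      ultimately show False by simp
    qed
  qed
  let ?S = "P \<inter> voronoi (G s) x"
  let ?Q = "\<lambda>p. p \<in> ?S \<and> (\<forall>q \<in> ?S. dist p x < dist q x \<or> (dist p x = dist q x \<and> (p, q) \<in> R))"
  have ex: "\<exists>p. ?Q p"
    using best_exists[of ?S P R x] P_fin xG p0(1) R_ord by blast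
  have anti: "antisym R" using R_ord
    unfolding linear_order_on_def partial_order_on_def by auto
  have "\<exists>!p. ?Q p"
    using ex best_unique[OF anti] by blast
  then have bQ: "?Q (rep_point P R (G s) x)"
    unfolding rep_point_def by (rule theI')
  define b where "b = rep_point P R (G s) x"
  have bP: "b \<in> P" and bV: "b \<in> voronoi (Lat c a) x" using bQ c unfolding b_def by auto
  have "\<bar>b$i - y$i\<bar> \<le> (2*a)/2" for i
  proof -
    have "\<bar>b$i - x$i\<bar> \<le> a/2" by (rule cell_bound[OF apos xL bV])
    moreover have "\<bar>x$i - y$i\<bar> \<le> a/2" by (rule xy)
    ultimately show ?thesis by (simp add: abs_diff_le_iff) (smt (verit))
  qed
  then have bY: "b \<in> voronoi (G (s+1)) y" using lat_vor_mem[OF A2 yL] c' by simp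
  have gp: "grid_point (G (s+1)) b = y"
    unfolding grid_point_def
  proof (rule the_equality)
    show "y \<in> G (s+1) \<and> b \<in> voronoi (G (s+1)) y" using yG bY by simp
  next
    fix z assume "z \<in> G (s+1) \<and> b \<in> voronoi (G (s+1)) z"
    then show "z = y" using a_unique[OF bP, of "s+1"] yG bY by blast
  qed
  show ?thesis using vm gp unfolding b_def by simp
qed

end
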